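(* Let $G$ be an ordered graph, let $xy\in E(G)$ and $i\in\mathbb N$. If $\mathrm{h}_G(xy)>i$, then there is an edge $xz\in E(G)$ with $\mathrm{h}_G(xz)=i$ and $\mathrm{v}_G(xz)=x$.
   Context: An ordered graph is a finite simple graph $G$ equipped with a total order $\le_G$ on $E(G)$ and a total order $\le^V_G$ on $V(G)$. Let $\mathbb N=\{1,2,\dots\}$. Define $\preceq_{\mathrm{lex}}$ on $\mathbb N\times V(G)$ by $(i,v)\preceq_{\mathrm{lex}}(i',v')$ iff $i<i'$, or $i=i'$ and $v\le^V_G v'$. The height table $\mathrm{HT}(G)$ is a partially filled array indexed by $\mathbb N\times V(G)$, built by going through all $(i,v)$ in $\preceq_{\mathrm{lex}}$-increasing order and setting the entry at $(i,v)$ to be the $\le_G$-largest edge containing $v$ not yet entered into the table (blank if none remain). Every edge is entered exactly once; $\mathrm{ht}_G(e)=(\mathrm{h}_G(e),\mathrm{v}_G(e))$ is the position of $e$, with $\mathrm{h}_G(e)$ its row and $\mathrm{v}_G(e)$ its column. *)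

theory Defs
  imports Main
begin

definition ordered_graph :: "'v set \<Rightarrow> 'v set set \<Rightarrow> 'v rel \<Rightarrow> 'v set rel \<Rightarrow> bool" where
  "ordered_graph V E rV rE \<longleftrightarrow>
     finite V \<and> (\<forall>e\<in>E. \<exists>a b. a \<in> V \<and> b \<in> V \<and> a \<noteq> b \<and> e = {a, b}) \<and>
     linear_order_on V rV \<and> linear_order_on E rE"

definition vlist :: "'v set \<Rightarrow> 'v rel \<Rightarrow> 'v list" where
  "vlist V rV = (SOME xs. set xs = V \<and> distinct xs \<and> sorted_wrt (\<lambda>a b. (a, b) \<in> rV) xs)"

definition maxedge :: "'v set rel \<Rightarrow> 'v set set \<Rightarrow> 'v \<Rightarrow> 'v set option" where
  "maxedge rE R v = (if \<exists>e\<in>R. v \<in> e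
      then Some (THE e. e \<in> R \<and> v \<in> e \<and> (\<forall>e'\<in>R. v \<in> e' \<longrightarrow> (e', e) \<in> rE))
      else None)"

fun row_fill :: "'v set rel \<Rightarrow> 'v set set \<Rightarrow> 'v list \<Rightarrow> ('v \<Rightarrow> 'v set option) \<times> 'v set set" where
  "row_fill rE R [] = (\<lambda>_. None, R)"
| "row_fill rE R (v # vs) =
     (let c = maxedge rE R v;
          (t, R'') = row_fill rE (R - set_option c) vs
      in (t(v := c), R''))"

text \<open>Edges not yet entered before row Suc k (rows are numbered 1,2,...).\<close>
fun remaining :: "'v set \<Rightarrow> 'v set set \<Rightarrow> 'v rel \<Rightarrow> 'v set rel \<Rightarrow> nat \<Rightarrow> 'v set set" where
  "remaining V E rV rE 0 = E"
| "remaining V E rV rE (Suc k) = snd (row_fill rE (remaining V E rV rE k) (vlist V rV))"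

text \<open>The height table: entry at (i, v), i \<ge> 1; None = blank.\<close>
definition HT :: "'v set \<Rightarrow> 'v set set \<Rightarrow> 'v rel \<Rightarrow> 'v set rel \<Rightarrow> nat \<Rightarrow> 'v \<Rightarrow> 'v set option" where
  "HT V E rV rE i v = (if i = 0 then None
      else fst (row_fill rE (remaining V E rV rE (i - 1)) (vlist V rV)) v)"

definition ht :: "'v set \<Rightarrow> 'v set set \<Rightarrow> 'v rel \<Rightarrow> 'v set rel \<Rightarrow> 'v set \<Rightarrow> nat \<times> 'v" where
  "ht V E rV rE e = (THE p. 1 \<le> fst p \<and> snd p \<in> V \<and> HT V E rV rE (fst p) (snd p) = Some e)"

definition hrow :: "'v set \<Rightarrow> 'v set set \<Rightarrow> 'v rel \<Rightarrow> 'v set rel \<Rightarrow> 'v set \<Rightarrow> nat" where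
  "hrow V E rV rE e = fst (ht V E rV rE e)"

definition vcol :: "'v set \<Rightarrow> 'v set set \<Rightarrow> 'v rel \<Rightarrow> 'v set rel \<Rightarrow> 'v set \<Rightarrow> 'v" where
  "vcol V E rV rE e = snd (ht V E rV rE e)"

end

theory Submission imports Defs begin

lemma lin_max:
  assumes "finite S" "S \<noteq> {}" "S \<subseteq> A" "linear_order_on A r"
  shows "\<exists>m\<in>S. \<forall>e\<in>S. (e, m) \<in> r"
  using assms
proof (induction S rule: finite_ne_induct)
  case (singleton x)
  then show ?case using assms(4) by (auto simp: linear_order_on_def partial_order_on_def preorder_on_def refl_on_def)
next
  case (insert x F)
  then obtain m where m: "m \<in> F" "\<forall>e\<in>F. (e, m) \<in> r" by auto
  have lo: "refl_on A r" "trans r" "total_on A r" using insert.prems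
    by (auto simp: linear_order_on_def partial_order_on_def preorder_on_def)
  show ?case
  proof (cases "(x, m) \<in> r")
    case True then show ?thesis using m lo insert.prems by (auto simp: refl_on_def)
  next
    case False
    then have "(m, x) \<in> r" using lo(3) m insert.prems unfolding total_on_def refl_on_def
      by (metis insert_subset lo(1) refl_on_def subsetD)
    then show ?thesis using m lo(2) lo(1) insert.prems by (auto simp: refl_on_def dest: transD)
  qed
qed

lemma lin_min:
  assumes "finite S" "S \<noteq> {}" "S \<subseteq> A" "linear_order_on A r"
  shows "\<exists>m\<in>S. \<forall>e\<in>S. (m, e) \<in> r"
proof -
  have "linear_order_on A (r\<inverse>)" using assms(4) by (simp add: linear_order_on_converse)
  from lin_max[OF assms(1-3) this] show ?thesis by auto
qed

lemma vlist_ex: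
  assumes "finite U" "U \<subseteq> V" "linear_order_on V r"
  shows "\<exists>xs. set xs = U \<and> distinct xs \<and> sorted_wrt (\<lambda>a b. (a, b) \<in> r) xs"
  using assms(1,2)
proof (induction U rule: finite_remove_induct)
  case empty then show ?case by auto
next
  case (remove U)
  obtain m where m: "m \<in> U" "\<forall>e\<in>U. (m, e) \<in> r" using lin_min[OF remove(1,2) remove.prems assms(3)] by auto
  obtain xs where xs: "set xs = U - {m}" "distinct xs" "sorted_wrt (\<lambda>a b. (a, b) \<in> r) xs"
    using remove.IH[of m] m(1) remove.prems by auto
  show ?case
    by (rule exI[of _ "m # xs"]) (use xs m in auto)
qed


lemma maxedge_prop:
  assumes "finite E" "linear_order_on E rE" "R \<subseteq> E"
  shows "maxedge rE R v = None \<longleftrightarrow> \<not>(\<exists>e\<in>R. v \<in> e)"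
    and "maxedge rE R v = Some e \<Longrightarrow> e \<in> R \<and> v \<in> e"
proof -
  show "maxedge rE R v = None \<longleftrightarrow> \<not>(\<exists>e\<in>R. v \<in> e)" by (simp add: maxedge_def)
next
  assume me: "maxedge rE R v = Some e"
  then have ex: "\<exists>e\<in>R. v \<in> e" by (auto simp: maxedge_def split: if_splits)
  let ?S = "{e\<in>R. v \<in> e}"
  have fin: "finite ?S" using assms(1,3) finite_subset by (metis (no_types, lifting) mem_Collect_eq subsetI subset_trans)
  obtain m where m: "m \<in> ?S" "\<forall>e\<in>?S. (e, m) \<in> rE"
    using lin_max[OF fin _ _ assms(2)] ex assms(3) by blast
  have as: "antisym rE" using assms(2) by (auto simp: linear_order_on_def partial_order_on_def)
  have "e = (THE e. e \<in> R \<and> v \<in> e \<and> (\<forall>e'\<in>R. v \<in> e' \<longrightarrow> (e', e) \<in> rE))"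
    using me ex by (simp add: maxedge_def)
  also have "\<dots> = m"
    by (rule the_equality) (use m as in \<open>auto dest: antisymD\<close>)
  finally show "e \<in> R \<and> v \<in> e" using m by auto
qed

lemma row_fill_Cons:
  "row_fill rE R (v # vs) = ((fst (row_fill rE (R - set_option (maxedge rE R v)) vs))(v := maxedge rE R v),
       snd (row_fill rE (R - set_option (maxedge rE R v)) vs))"
  by (simp add: Let_def split_def)

declare row_fill.simps(2)[simp del]

lemma rf_a:
  assumes "finite E" "linear_order_on E rE"
  shows "R \<subseteq> E \<Longrightarrow> fst (row_fill rE R vs) v = Some e \<Longrightarrow> e \<in> R \<and> v \<in> e \<and> v \<in> set vs"
proof (induction vs arbitrary: R)
  case Nil then show ?case by simp
next
  case (Cons w vs)
  show ?case
  proof (cases "v = w")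
    case True
    then show ?thesis using Cons.prems maxedge_prop[OF assms Cons.prems(1)] by (simp add: row_fill_Cons Let_def)
  next
    case False
    then have "fst (row_fill rE (R - set_option (maxedge rE R w)) vs) v = Some e"
      using Cons.prems by (simp add: row_fill_Cons Let_def)
    from Cons.IH[OF _ this] Cons.prems(1) show ?thesis by auto
  qed
qed

lemma rf_b:
  assumes "finite E" "linear_order_on E rE"
  shows "R \<subseteq> E \<Longrightarrow> distinct vs \<Longrightarrow> snd (row_fill rE R vs) = R - {e. \<exists>v. fst (row_fill rE R vs) v = Some e}"
proof (induction vs arbitrary: R)
  case Nil then show ?case by simp
next
  case (Cons w vs)
  define c where "c = maxedge rE R w"
  define p where "p = row_fill rE (R - set_option c) vs"
  have R': "R - set_option c \<subseteq> E" using Cons.prems by auto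
  have IH: "snd p = (R - set_option c) - {e. \<exists>v. fst p v = Some e}"
    using Cons.IH[OF R'] Cons.prems p_def by auto
  have nw: "fst p w = None" using rf_a[OF assms R', of vs w] Cons.prems unfolding p_def
    by (cases "fst (row_fill rE (R - set_option c) vs) w") auto
  have eq: "row_fill rE R (w # vs) = ((fst p)(w := c), snd p)"
    by (simp add: row_fill_Cons Let_def c_def p_def)
  have "{e. \<exists>v. ((fst p)(w := c)) v = Some e} = set_option c \<union> {e. \<exists>v. fst p v = Some e}"
    using nw by (auto split: if_splits) (metis option.distinct(1))+
  then show ?case unfolding eq using IH by auto
qed


lemma rf_c:
  assumes "finite E" "linear_order_on E rE"
  shows "R \<subseteq> E \<Longrightarrow> distinct vs \<Longrightarrow> fst (row_fill rE R vs) v = Some e \<Longrightarrow> fst (row_fill rE R vs) u = Some e \<Longrightarrow> v = u"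
proof (induction vs arbitrary: R)
  case Nil then show ?case by simp
next
  case (Cons w vs)
  define c where "c = maxedge rE R w"
  define p where "p = row_fill rE (R - set_option c) vs"
  have R': "R - set_option c \<subseteq> E" using Cons.prems by auto
  have eq: "row_fill rE R (w # vs) = ((fst p)(w := c), snd p)"
    by (simp add: row_fill_Cons c_def p_def)
  have A: "fst p q = Some e \<Longrightarrow> e \<in> R - set_option c" for q
    using rf_a[OF assms R', of vs q e] p_def by auto
  show ?case
  proof (cases "v = w")
    case True
    then show ?thesis using Cons.prems A unfolding eq by (auto split: if_splits)
  next
    case False
    show ?thesis
    proof (cases "u = w")
      case True
      then show ?thesis using Cons.prems A False unfolding eq by (auto split: if_splits)
    next
      case False2: False
      then show ?thesis using Cons.IH[OF R'] Cons.prems False unfolding eq p_def by auto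
    qed
  qed
qed

lemma rf_d:
  assumes "finite E" "linear_order_on E rE"
  shows "R \<subseteq> E \<Longrightarrow> distinct vs \<Longrightarrow> e0 \<in> R \<Longrightarrow> x \<in> e0 \<Longrightarrow> x \<in> set vs \<Longrightarrow> e0 \<in> snd (row_fill rE R vs)
     \<Longrightarrow> fst (row_fill rE R vs) x \<noteq> None"
proof (induction vs arbitrary: R)
  case Nil then show ?case by simp
next
  case (Cons w vs)
  define c where "c = maxedge rE R w"
  define p where "p = row_fill rE (R - set_option c) vs"
  have R': "R - set_option c \<subseteq> E" using Cons.prems by auto
  have eq: "row_fill rE R (w # vs) = ((fst p)(w := c), snd p)"
    by (simp add: row_fill_Cons c_def p_def)
  show ?case
  proof (cases "x = w")
    case True
    then have "c \<noteq> None" using maxedge_prop(1)[OF assms Cons.prems(1), of w] Cons.prems c_def by auto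
    then show ?thesis using True unfolding eq by simp
  next
    case False
    have "e0 \<in> snd p" using Cons.prems eq by simp
    then have "e0 \<in> R - set_option c" using rf_b[OF assms R'] Cons.prems p_def by auto
    then have "fst p x \<noteq> None" using Cons.IH[OF R'] Cons.prems False \<open>e0 \<in> snd p\<close> p_def by auto
    then show ?thesis using False unfolding eq by simp
  qed
qed


lemma og_facts:
  assumes "ordered_graph V E rV rE"
  shows "finite E" "linear_order_on E rE" "set (vlist V rV) = V" "distinct (vlist V rV)"
    "e \<in> E \<Longrightarrow> \<exists>a b. a \<in> V \<and> b \<in> V \<and> a \<noteq> b \<and> e = {a, b}"
proof -
  have fV: "finite V" and lV: "linear_order_on V rV" and lE: "linear_order_on E rE"
    and ed: "\<forall>e\<in>E. \<exists>a b. a \<in> V \<and> b \<in> V \<and> a \<noteq> b \<and> e = {a, b}"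
    using assms by (auto simp: ordered_graph_def)
  have "E \<subseteq> Pow V" using ed by fastforce
  then show "finite E" using fV finite_subset by blast
  show "linear_order_on E rE" by fact
  have ex: "\<exists>xs. set xs = V \<and> distinct xs \<and> sorted_wrt (\<lambda>a b. (a, b) \<in> rV) xs"
    using vlist_ex[OF fV subset_refl lV] .
  show "set (vlist V rV) = V" "distinct (vlist V rV)"
    using someI_ex[OF ex] unfolding vlist_def by auto
  show "e \<in> E \<Longrightarrow> \<exists>a b. a \<in> V \<and> b \<in> V \<and> a \<noteq> b \<and> e = {a, b}" using ed by auto
qed

context
  fixes V :: "'v set" and E :: "'v set set" and rV :: "'v rel" and rE :: "'v set rel"
  assumes og: "ordered_graph V E rV rE"
begin

lemma rem_sub: "remaining V E rV rE k \<subseteq> E"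
proof (induction k)
  case 0 then show ?case by simp
next
  case (Suc k)
  then show ?case using rf_b[OF og_facts(1,2)[OF og] Suc og_facts(4)[OF og]] by auto
qed

lemma rem_Suc: "remaining V E rV rE (Suc k) = remaining V E rV rE k - {e. \<exists>v. HT V E rV rE (Suc k) v = Some e}"
  using rf_b[OF og_facts(1,2)[OF og] rem_sub[of k] og_facts(4)[OF og]] by (simp add: HT_def)

lemma rem_mono: "k \<le> k' \<Longrightarrow> remaining V E rV rE k' \<subseteq> remaining V E rV rE k"
proof (induction k' rule: dec_induct)
  case base then show ?case by simp
next
  case (step n) then show ?case using rem_Suc[of n] by auto
qed

lemma HT_in: "HT V E rV rE k v = Some e \<Longrightarrow> 1 \<le> k \<and> e \<in> remaining V E rV rE (k - 1) \<and> v \<in> e \<and> v \<in> V"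
  using rf_a[OF og_facts(1,2)[OF og] rem_sub[of "k - 1"], of "vlist V rV" v e] og_facts(3)[OF og]
  by (auto simp: HT_def split: if_splits)

lemma HT_uniq_lt: "HT V E rV rE k v = Some e \<Longrightarrow> HT V E rV rE k' v' = Some e \<Longrightarrow> k < k' \<Longrightarrow> False"
proof -
  assume a: "HT V E rV rE k v = Some e" "HT V E rV rE k' v' = Some e" "k < k'"
  have k1: "1 \<le> k" using HT_in[OF a(1)] by auto
  have "e \<in> remaining V E rV rE (k' - 1)" using HT_in[OF a(2)] by auto
  moreover have "remaining V E rV rE (k' - 1) \<subseteq> remaining V E rV rE (Suc (k - 1))"
    by (rule rem_mono) (use a(3) k1 in auto)
  ultimately show False using rem_Suc[of "k - 1"] a(1) k1 by auto
qed

lemma HT_uniq: "HT V E rV rE k v = Some e \<Longrightarrow> HT V E rV rE k' v' = Some e \<Longrightarrow> k = k' \<and> v = v'"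
proof -
  assume a: "HT V E rV rE k v = Some e" "HT V E rV rE k' v' = Some e"
  have "k = k'" using HT_uniq_lt[OF a] HT_uniq_lt[OF a(2,1)] by fastforce
  moreover have "v = v'"
    using rf_c[OF og_facts(1,2)[OF og] rem_sub[of "k - 1"] og_facts(4)[OF og], of v e v'] a \<open>k = k'\<close>
    by (auto simp: HT_def split: if_splits)
  ultimately show ?thesis by simp
qed

lemma ht_eq: "HT V E rV rE k v = Some e \<Longrightarrow> ht V E rV rE e = (k, v)"
  unfolding ht_def
  by (rule the_equality) (use HT_in HT_uniq in \<open>auto\<close>)

end

theorem mainTheorem13:
  fixes V :: "'v set" and E :: "'v set set" and rV :: "'v rel" and rE :: "'v set rel"
    and x y :: 'v and i :: nat
  assumes "ordered_graph V E rV rE"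
    and "{x, y} \<in> E"
    and "1 \<le> i"
    and "hrow V E rV rE {x, y} > i"
  shows "\<exists>z. {x, z} \<in> E \<and> hrow V E rV rE {x, z} = i \<and> vcol V E rV rE {x, z} = x"
proof -
  note og = assms(1)
  have notin: "HT V E rV rE k v \<noteq> Some {x, y}" if "k \<le> i" for k v
  proof
    assume "HT V E rV rE k v = Some {x, y}"
    then have "hrow V E rV rE {x, y} = k" using ht_eq[OF og] by (simp add: hrow_def)
    then show False using that assms(4) by simp
  qed
  have xy: "{x, y} \<in> remaining V E rV rE (i - 1)" "{x, y} \<in> snd (row_fill rE (remaining V E rV rE (i - 1)) (vlist V rV))"
  proof -
    have "{x, y} \<in> remaining V E rV rE k" if "k \<le> i" for k
      using that
    proof (induction k)
      case 0 then show ?case using assms(2) by simp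
    next
      case (Suc k) then show ?case using rem_Suc[OF og, of k] notin[of "Suc k"] by auto
    qed
    from this[of i] show "{x, y} \<in> snd (row_fill rE (remaining V E rV rE (i - 1)) (vlist V rV))"
      using assms(3) by (cases i) auto
    then show "{x, y} \<in> remaining V E rV rE (i - 1)"
      using rf_b[OF og_facts(1,2)[OF og] rem_sub[OF og, of "i - 1"] og_facts(4)[OF og]] by auto
  qed
  have xV: "x \<in> V" using og_facts(5)[OF og assms(2)] by (metis doubleton_eq_iff insert_iff)
  have "HT V E rV rE i x \<noteq> None"
    using rf_d[OF og_facts(1,2)[OF og] rem_sub[OF og, of "i - 1"] og_facts(4)[OF og] xy(1) _ _ xy(2)]
      og_facts(3)[OF og] xV assms(3) by (simp add: HT_def)
  then obtain e where e: "HT V E rV rE i x = Some e" by auto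
  have eE: "e \<in> E" "x \<in> e" using HT_in[OF og e] rem_sub[OF og] by auto
  then obtain z where ez: "e = {x, z}" using og_facts(5)[OF og eE(1)] by auto
  show ?thesis
    by (rule exI[of _ z]) (use eE ez ht_eq[OF og e] in \<open>auto simp: hrow_def vcol_def\<close>)
qed

end
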